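(* Let $\delta\in(0,1]$, $\varepsilon>0$, and let $G=(V,E)$ be a simple graph on $n$ vertices with minimal degree at least $\delta n$. Let $V=V_1\sqcup\dots\sqcup V_k$ be an $(\varepsilon,\delta,n^{1.5})$-good decomposition of $G$ with parameter $\theta$, and let $X$ be the simple random walk on $G$. Then for any $C>0$, any $i\in[k]$ and any $v\in V$, \[ \Pr_v\left(\exists t\in[1,C\sqrt n]: X_t\in V_i,\ X_{t+1}\notin V_i\right)\le\frac{C\theta^2\varepsilon^9}{\delta^2}. \] Furthermore, for any $C>0$ and $i\in[k]$ there exists a set $V_i'\subseteq V_i$ with $|V_i'|\ge\delta^4n/80$ such that for every $v\in V_i'$, \[ \Pr_v\left(X[0,C\sqrt n]\subseteq V_i\right)\ge 1-\frac{80C\theta^2\varepsilon^9}{\delta^6}. \]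
   Context: $\deg(v,U)$ is the number of edges between $v$ and $U$, $E(A,B)$ the set of edges between $A$ and $B$, $G[U]$ the induced subgraph, and the spectral gap of a graph is $1-\lambda_2$ for the transition matrix of its simple random walk. For $\varepsilon\in(0,1)$, $\delta\in(0,1]$, $\beta>0$ and $G$ on $n$ vertices with minimal degree at least $\delta n$, a partition $V=V_1\sqcup\dots\sqcup V_k$ is an $(\varepsilon,\delta,\beta)$-good decomposition with parameter $\theta$ if $\theta\in[\varepsilon^{11\cdot 2^{2/\delta}},\varepsilon]$ and for every $i\in[k]$: (1) $k\le 2/\delta$; (2) $|V_i|\ge\delta n/2$; (3) the spectral gap of $G[V_i]$ is at least $\frac{\delta^{15}\theta\beta}{2^{31}n^2}$; (4) $\deg(v,V_i)\ge\delta^4n/40$ for all $v\in V_i$; (5) $|E(V_i,V\setminus V_i)|\le\varepsilon^9\theta^2\beta$. $X[a,b]$ denotes $\{X_j: j\in[\lceil a\rceil,\lfloor b\rfloor]\cap\mathbb N\}$ and $\Pr_v$ refers to the walk started at $v$. *)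

theory Defs
  imports "HOL-Analysis.Analysis" "Jordan_Normal_Form.Char_Poly" "HOL-Library.Multiset"
begin

definition simple_graph :: "'a set \<Rightarrow> ('a \<Rightarrow> 'a \<Rightarrow> bool) \<Rightarrow> bool" where
  "simple_graph V E \<longleftrightarrow> finite V \<and> (\<forall>u w. E u w \<longrightarrow> u \<in> V \<and> w \<in> V) \<and>
     (\<forall>u w. E u w \<longrightarrow> E w u) \<and> (\<forall>u. \<not> E u u)"

definition deg_in :: "('a \<Rightarrow> 'a \<Rightarrow> bool) \<Rightarrow> 'a \<Rightarrow> 'a set \<Rightarrow> nat" where
  "deg_in E v U = card {u \<in> U. E v u}"

text \<open>E(A,B): set of edges between A and B (as ordered pairs; for disjoint A, B this
  is in bijection with the unordered edges).\<close>
definition edges_between :: "('a \<Rightarrow> 'a \<Rightarrow> bool) \<Rightarrow> 'a set \<Rightarrow> 'a set \<Rightarrow> ('a \<times> 'a) set" where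
  "edges_between E A B = {(u, w). u \<in> A \<and> w \<in> B \<and> E u w}"

definition trans_prob :: "('a \<Rightarrow> 'a \<Rightarrow> bool) \<Rightarrow> 'a set \<Rightarrow> 'a \<Rightarrow> 'a \<Rightarrow> real" where
  "trans_prob E U u w = (if u \<in> U \<and> w \<in> U \<and> E u w then 1 / real (deg_in E u U) else 0)"

definition trans_matrix :: "('a::linorder \<Rightarrow> 'a \<Rightarrow> bool) \<Rightarrow> 'a set \<Rightarrow> real mat" where
  "trans_matrix E U = (let vs = sorted_list_of_set U in
     mat (length vs) (length vs) (\<lambda>(a, b). trans_prob E U (vs ! a) (vs ! b)))"

text \<open>Second largest eigenvalue (with multiplicity) of the transition matrix of G[U].
  The transition matrix is reversible, so all eigenvalues are real and are the real
  roots of the characteristic polynomial.\<close>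
definition lambda2 :: "('a::linorder \<Rightarrow> 'a \<Rightarrow> bool) \<Rightarrow> 'a set \<Rightarrow> real" where
  "lambda2 E U = rev (sorted_list_of_multiset (proots (char_poly (trans_matrix E U)))) ! 1"

definition spectral_gap :: "('a::linorder \<Rightarrow> 'a \<Rightarrow> bool) \<Rightarrow> 'a set \<Rightarrow> real" where
  "spectral_gap E U = 1 - lambda2 E U"

definition good_decomposition ::
  "'a::linorder set \<Rightarrow> ('a \<Rightarrow> 'a \<Rightarrow> bool) \<Rightarrow> real \<Rightarrow> real \<Rightarrow> real \<Rightarrow> nat \<Rightarrow> (nat \<Rightarrow> 'a set) \<Rightarrow> real \<Rightarrow> bool" where
  "good_decomposition V E \<epsilon> \<delta> \<beta> k Vs \<theta> \<longleftrightarrow>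
     (let n = real (card V) in
      0 < \<epsilon> \<and> \<epsilon> < 1 \<and> 0 < \<delta> \<and> \<delta> \<le> 1 \<and> 0 < \<beta> \<and>
      (\<Union>i\<in>{1..k}. Vs i) = V \<and>
      (\<forall>i\<in>{1..k}. \<forall>j\<in>{1..k}. i \<noteq> j \<longrightarrow> Vs i \<inter> Vs j = {}) \<and>
      \<epsilon> powr (11 * 2 powr (2 / \<delta>)) \<le> \<theta> \<and> \<theta> \<le> \<epsilon> \<and>
      real k \<le> 2 / \<delta> \<and>
      (\<forall>i\<in>{1..k}.
         real (card (Vs i)) \<ge> \<delta> * n / 2 \<and>
         spectral_gap E (Vs i) \<ge> \<delta> ^ 15 * \<theta> * \<beta> / (2 ^ 31 * n\<^sup>2) \<and>
         (\<forall>v\<in>Vs i. real (deg_in E v (Vs i)) \<ge> \<delta> ^ 4 * n / 40) \<and>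
         real (card (edges_between E (Vs i) (V - Vs i))) \<le> \<epsilon> ^ 9 * \<theta>\<^sup>2 * \<beta>))"

text \<open>Pr_v of an event depending on (X_0, ..., X_m) for the simple random walk on G=(V,E):
  the sum over all vertex sequences of length m+1 starting at v of the path
  probability times the indicator of the event.\<close>
definition walk_prob :: "'a set \<Rightarrow> ('a \<Rightarrow> 'a \<Rightarrow> bool) \<Rightarrow> 'a \<Rightarrow> nat \<Rightarrow> ('a list \<Rightarrow> bool) \<Rightarrow> real" where
  "walk_prob V E v m P =
     (\<Sum>xs\<in>{xs. length xs = Suc m \<and> set xs \<subseteq> V \<and> xs ! 0 = v}.
        (if P xs then (\<Prod>j<m. trans_prob E V (xs ! j) (xs ! Suc j)) else 0))"

end

theory Submission
  imports Defs
begin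

definition Lset :: "'a set \<Rightarrow> 'a \<Rightarrow> nat \<Rightarrow> 'a list set" where
  "Lset V v m = {xs. length xs = Suc m \<and> set xs \<subseteq> V \<and> xs ! 0 = v}"

definition pw :: "('a \<Rightarrow> 'a \<Rightarrow> bool) \<Rightarrow> 'a set \<Rightarrow> 'a list \<Rightarrow> nat \<Rightarrow> real" where
  "pw E V xs m = (\<Prod>j<m. trans_prob E V (xs ! j) (xs ! Suc j))"

lemma walk_prob_alt: "walk_prob V E v m P = (\<Sum>xs\<in>Lset V v m. if P xs then pw E V xs m else 0)"
  unfolding walk_prob_def Lset_def pw_def by simp

lemma Lset_finite: "finite V \<Longrightarrow> finite (Lset V v m)"
  unfolding Lset_def
  by (rule finite_subset[OF _ finite_lists_length_eq[of V "Suc m"]]) auto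

lemma trans_prob_nonneg: "trans_prob E V u w \<ge> 0"
  unfolding trans_prob_def by simp

lemma pw_nonneg: "pw E V xs m \<ge> 0"
  unfolding pw_def by (intro prod_nonneg) (simp add: trans_prob_nonneg)

lemma walk_prob_nonneg: "walk_prob V E v m P \<ge> 0"
  unfolding walk_prob_alt by (intro sum_nonneg) (simp add: pw_nonneg)

lemma walk_prob_mono:
  assumes "\<And>xs. xs \<in> Lset V v m \<Longrightarrow> P xs \<Longrightarrow> Q xs"
  shows "walk_prob V E v m P \<le> walk_prob V E v m Q"
  unfolding walk_prob_alt using assms by (intro sum_mono) (auto simp: pw_nonneg)

lemma walk_prob_cong:
  assumes "\<And>xs. xs \<in> Lset V v m \<Longrightarrow> P xs = Q xs"
  shows "walk_prob V E v m P = walk_prob V E v m Q"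
  unfolding walk_prob_alt using assms by (intro sum.cong) auto

lemma walk_prob_compl:
  "walk_prob V E v m P + walk_prob V E v m (\<lambda>xs. \<not> P xs) = walk_prob V E v m (\<lambda>_. True)"
  unfolding walk_prob_alt by (subst sum.distrib[symmetric]) (intro sum.cong, auto)

lemma walk_prob_union:
  assumes fV: "finite V" and fT: "finite T"
    and h: "\<And>xs. xs \<in> Lset V v m \<Longrightarrow> P xs \<Longrightarrow> \<exists>t\<in>T. Q t xs"
  shows "walk_prob V E v m P \<le> (\<Sum>t\<in>T. walk_prob V E v m (Q t))"
proof -
  have "(\<Sum>t\<in>T. walk_prob V E v m (Q t))
      = (\<Sum>xs\<in>Lset V v m. \<Sum>t\<in>T. if Q t xs then pw E V xs m else 0)"
    unfolding walk_prob_alt by (rule sum.swap)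
  moreover have "(if P xs then pw E V xs m else 0) \<le> (\<Sum>t\<in>T. if Q t xs then pw E V xs m else 0)"
    if xs: "xs \<in> Lset V v m" for xs
  proof (cases "P xs")
    case True
    then obtain t where t: "t \<in> T" "Q t xs" using h xs by blast
    have "pw E V xs m = (if Q t xs then pw E V xs m else 0)" using t by simp
    also have "\<dots> \<le> (\<Sum>t\<in>T. if Q t xs then pw E V xs m else 0)"
      by (rule member_le_sum[OF t(1) _ fT]) (simp add: pw_nonneg)
    finally show ?thesis using True by simp
  next
    case False
    then show ?thesis by (simp add: sum_nonneg pw_nonneg)
  qed
  ultimately show ?thesis unfolding walk_prob_alt by (simp add: sum_mono)
qed


lemma Lset_Suc:
  assumes "v \<in> V"
  shows "Lset V v (Suc m) = Cons v ` (\<Union>y\<in>V. Lset V y m)"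
proof
  show "Lset V v (Suc m) \<subseteq> Cons v ` (\<Union>y\<in>V. Lset V y m)"
  proof
    fix xs assume xs: "xs \<in> Lset V v (Suc m)"
    then have len: "length xs = Suc (Suc m)" and sx: "set xs \<subseteq> V" and x0: "xs ! 0 = v"
      unfolding Lset_def by auto
    obtain z zs where eq: "xs = z # zs" using len by (cases xs) auto
    have lzs: "length zs = Suc m" using len eq by simp
    have z: "z = v" using x0 eq by simp
    have szs: "set zs \<subseteq> V" using sx eq by simp
    have "zs ! 0 \<in> set zs" using lzs by (intro nth_mem) simp
    then have y: "zs ! 0 \<in> V" using szs by blast
    have "zs \<in> Lset V (zs ! 0) m" unfolding Lset_def using lzs szs by simp
    then show "xs \<in> Cons v ` (\<Union>y\<in>V. Lset V y m)" using eq z y by blast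
  qed
next
  show "Cons v ` (\<Union>y\<in>V. Lset V y m) \<subseteq> Lset V v (Suc m)"
    using assms unfolding Lset_def by auto
qed

lemma Lset_empty: "v \<notin> V \<Longrightarrow> Lset V v m = {}"
proof -
  assume v: "v \<notin> V"
  { fix xs assume xs: "xs \<in> Lset V v m"
    then have "xs ! 0 \<in> set xs" unfolding Lset_def by (intro nth_mem) simp
    then have False using xs v unfolding Lset_def by auto }
  then show ?thesis by blast
qed


lemma walk_prob_Suc:
  assumes fV: "finite V"
  shows "walk_prob V E v (Suc m) Q
      = (\<Sum>y\<in>V. trans_prob E V v y * walk_prob V E y m (\<lambda>zs. Q (v # zs)))"
proof (cases "v \<in> V")
  case False
  then show ?thesis using Lset_empty[OF False] unfolding walk_prob_alt by (simp add: trans_prob_def)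
next
  case True
  have pwc: "pw E V (v # zs) (Suc m) = trans_prob E V v (zs ! 0) * pw E V zs m" for zs
    unfolding pw_def by (subst prod.lessThan_Suc_shift) simp
  have "walk_prob V E v (Suc m) Q
      = (\<Sum>xs\<in>Cons v ` (\<Union>y\<in>V. Lset V y m). if Q xs then pw E V xs (Suc m) else 0)"
    unfolding walk_prob_alt Lset_Suc[OF True] ..
  also have "\<dots> = (\<Sum>zs\<in>(\<Union>y\<in>V. Lset V y m). if Q (v # zs) then pw E V (v # zs) (Suc m) else 0)"
    by (subst sum.reindex) (auto simp del: UN_iff)
  also have "\<dots> = (\<Sum>y\<in>V. \<Sum>zs\<in>Lset V y m. if Q (v # zs) then pw E V (v # zs) (Suc m) else 0)"
  proof (rule sum.UNION_disjoint)
    show "finite V" by (rule fV)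
    show "\<forall>i\<in>V. finite (Lset V i m)" using fV by (simp add: Lset_finite)
    show "\<forall>i\<in>V. \<forall>j\<in>V. i \<noteq> j \<longrightarrow> Lset V i m \<inter> Lset V j m = {}"
      unfolding Lset_def by blast
  qed
  also have "\<dots> = (\<Sum>y\<in>V. trans_prob E V v y * walk_prob V E y m (\<lambda>zs. Q (v # zs)))"
    unfolding walk_prob_alt sum_distrib_left
  proof (intro sum.cong refl)
    fix y zs assume "zs \<in> Lset V y m"
    then have "zs ! 0 = y" unfolding Lset_def by simp
    then show "(if Q (v # zs) then pw E V (v # zs) (Suc m) else 0)
        = trans_prob E V v y * (if Q (v # zs) then pw E V zs m else 0)"
      by (simp add: pwc)
  qed
  finally show ?thesis .
qed

lemma walk_prob_total:
  assumes fV: "finite V" and st: "\<And>u. u \<in> V \<Longrightarrow> (\<Sum>w\<in>V. trans_prob E V u w) = 1"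
  shows "v \<in> V \<Longrightarrow> walk_prob V E v m (\<lambda>_. True) = 1"
proof (induction m arbitrary: v)
  case 0
  have "Lset V v 0 = {[v]}" using 0 unfolding Lset_def
    by (auto simp: length_Suc_conv)
  then show ?case unfolding walk_prob_alt pw_def by simp
next
  case (Suc m)
  have "walk_prob V E v (Suc m) (\<lambda>_. True) = (\<Sum>y\<in>V. trans_prob E V v y * 1)"
    unfolding walk_prob_Suc[OF fV] using Suc.IH by (intro sum.cong refl) simp
  then show ?case using st[OF Suc.prems] by simp
qed

lemma walk_prob_false: "walk_prob V E v m (\<lambda>_. False) = 0"
  unfolding walk_prob_alt by simp

definition hx :: "('a \<Rightarrow> 'a \<Rightarrow> bool) \<Rightarrow> 'a set \<Rightarrow> 'a set \<Rightarrow> 'a \<Rightarrow> real" where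
  "hx E V A y = (\<Sum>b\<in>V. if y \<in> A \<and> b \<notin> A then trans_prob E V y b else 0)"

lemma hx_nonneg: "hx E V A y \<ge> 0"
  unfolding hx_def by (intro sum_nonneg) (simp add: trans_prob_nonneg)

lemma walk_prob_Q0:
  assumes fV: "finite V" and st: "\<And>u. u \<in> V \<Longrightarrow> (\<Sum>w\<in>V. trans_prob E V u w) = 1"
  shows "walk_prob V E v (Suc m) (\<lambda>xs. xs ! 0 \<in> A \<and> xs ! Suc 0 \<notin> A) = hx E V A v"
proof -
  have "walk_prob V E v (Suc m) (\<lambda>xs. xs ! 0 \<in> A \<and> xs ! Suc 0 \<notin> A)
     = (\<Sum>y\<in>V. trans_prob E V v y * walk_prob V E y m (\<lambda>zs. v \<in> A \<and> zs ! 0 \<notin> A))"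
    unfolding walk_prob_Suc[OF fV] by simp
  also have "\<dots> = (\<Sum>y\<in>V. if v \<in> A \<and> y \<notin> A then trans_prob E V v y else 0)"
  proof (intro sum.cong refl)
    fix y assume y: "y \<in> V"
    have "walk_prob V E y m (\<lambda>zs. v \<in> A \<and> zs ! 0 \<notin> A) = walk_prob V E y m (\<lambda>_. v \<in> A \<and> y \<notin> A)"
      by (rule walk_prob_cong) (simp add: Lset_def)
    also have "\<dots> = (if v \<in> A \<and> y \<notin> A then 1 else 0)"
    proof (cases "v \<in> A \<and> y \<notin> A")
      case True then show ?thesis using walk_prob_total[OF fV st y] by simp
    next
      case False
      then have e: "(v \<in> A \<and> y \<notin> A) = False" by blast
      show ?thesis unfolding e using walk_prob_false[of V E y m] by simp
    qed
    finally show "trans_prob E V v y * walk_prob V E y m (\<lambda>zs. v \<in> A \<and> zs ! 0 \<notin> A)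
        = (if v \<in> A \<and> y \<notin> A then trans_prob E V v y else 0)" by simp
  qed
  finally show ?thesis unfolding hx_def .
qed

lemma walk_prob_Qt:
  assumes fV: "finite V" and st: "\<And>u. u \<in> V \<Longrightarrow> (\<Sum>w\<in>V. trans_prob E V u w) = 1"
    and bnd: "\<And>u w. trans_prob E V u w \<le> c"
  shows "v \<in> V \<Longrightarrow> Suc (Suc t) \<le> m \<Longrightarrow>
    walk_prob V E v m (\<lambda>xs. xs ! Suc t \<in> A \<and> xs ! Suc (Suc t) \<notin> A) \<le> c * (\<Sum>y\<in>V. hx E V A y)"
proof (induction t arbitrary: v m)
  case 0
  from 0 obtain m' where m: "m = Suc (Suc m')"
    by (cases m; cases "m - 1") auto
  have "walk_prob V E v m (\<lambda>xs. xs ! Suc 0 \<in> A \<and> xs ! Suc (Suc 0) \<notin> A)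
     = (\<Sum>y\<in>V. trans_prob E V v y * walk_prob V E y (Suc m') (\<lambda>zs. (v # zs) ! Suc 0 \<in> A \<and> (v # zs) ! Suc (Suc 0) \<notin> A))"
    unfolding m by (rule walk_prob_Suc[OF fV])
  also have "\<dots> = (\<Sum>y\<in>V. trans_prob E V v y * hx E V A y)"
    using walk_prob_Q0[OF fV st, of _ m' A] by simp
  also have "\<dots> \<le> (\<Sum>y\<in>V. c * hx E V A y)"
    by (intro sum_mono mult_right_mono bnd hx_nonneg)
  also have "\<dots> = c * (\<Sum>y\<in>V. hx E V A y)" by (rule sum_distrib_left[symmetric])
  finally show ?case .
next
  case (Suc t)
  from Suc.prems(2) obtain m' where m: "m = Suc m'" and m': "Suc (Suc t) \<le> m'"
    by (cases m) auto
  have "walk_prob V E v m (\<lambda>xs. xs ! Suc (Suc t) \<in> A \<and> xs ! Suc (Suc (Suc t)) \<notin> A)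
     = (\<Sum>y\<in>V. trans_prob E V v y * walk_prob V E y m' (\<lambda>zs. (v # zs) ! Suc (Suc t) \<in> A \<and> (v # zs) ! Suc (Suc (Suc t)) \<notin> A))"
    unfolding m by (rule walk_prob_Suc[OF fV])
  also have "\<dots> = (\<Sum>y\<in>V. trans_prob E V v y * walk_prob V E y m' (\<lambda>zs. zs ! Suc t \<in> A \<and> zs ! Suc (Suc t) \<notin> A))"
    by simp
  also have "\<dots> \<le> (\<Sum>y\<in>V. trans_prob E V v y * (c * (\<Sum>y\<in>V. hx E V A y)))"
    by (intro sum_mono mult_left_mono Suc.IH m' trans_prob_nonneg) 
  also have "\<dots> = c * (\<Sum>y\<in>V. hx E V A y)"
    by (simp only: sum_distrib_right[symmetric] st[OF Suc.prems(1)] mult_1)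
  finally show ?case .
qed


lemma tp_bound:
  assumes "\<forall>v\<in>V. real (deg_in E v V) \<ge> d" "d > 0"
  shows "trans_prob E V u w \<le> 1 / d"
proof (cases "u \<in> V \<and> w \<in> V \<and> E u w")
  case True
  then have "real (deg_in E u V) \<ge> d" using assms by blast
  then show ?thesis using True assms(2) unfolding trans_prob_def by (simp add: frac_le)
next
  case False
  then have "trans_prob E V u w = 0" unfolding trans_prob_def by auto
  then show ?thesis using assms(2) by simp
qed

lemma tp_stoch:
  assumes fV: "finite V" and pos: "deg_in E u V > 0" and u: "u \<in> V"
  shows "(\<Sum>w\<in>V. trans_prob E V u w) = 1"
proof -
  have "(\<Sum>w\<in>V. trans_prob E V u w) = (\<Sum>w\<in>V. if E u w then 1 / real (deg_in E u V) else 0)"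
    using u unfolding trans_prob_def by (intro sum.cong) auto
  also have "\<dots> = (\<Sum>w\<in>{w\<in>V. E u w}. 1 / real (deg_in E u V))"
    by (rule sum.inter_filter[OF fV, symmetric])
  also have "\<dots> = real (card {w\<in>V. E u w}) * (1 / real (deg_in E u V))" by simp
  also have "\<dots> = 1" using pos unfolding deg_in_def by simp
  finally show ?thesis .
qed

lemma hx_le:
  assumes fV: "finite V" and bnd: "\<And>u w. trans_prob E V u w \<le> c"
  shows "hx E V A y \<le> c * (if y \<in> A then real (deg_in E y (V - A)) else 0)"
proof (cases "y \<in> A")
  case False
  then show ?thesis unfolding hx_def by simp
next
  case True
  have "hx E V A y = (\<Sum>b\<in>V. if b \<notin> A then trans_prob E V y b else 0)"
    unfolding hx_def using True by simp
  also have "\<dots> \<le> (\<Sum>b\<in>V. if b \<in> V - A \<and> E y b then c else 0)"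
  proof (intro sum_mono)
    fix b assume b: "b \<in> V"
    show "(if b \<notin> A then trans_prob E V y b else 0) \<le> (if b \<in> V - A \<and> E y b then c else 0)"
      using b bnd[of y b] by (auto simp: trans_prob_def)
  qed
  also have "\<dots> = (\<Sum>b\<in>{b\<in>V. b \<in> V - A \<and> E y b}. c)"
    by (rule sum.inter_filter[OF fV, symmetric])
  also have "{b\<in>V. b \<in> V - A \<and> E y b} = {b \<in> V - A. E y b}" by auto
  finally show ?thesis using True unfolding deg_in_def by (simp add: mult.commute)
qed

lemma sum_deg_out:
  assumes fV: "finite V" and AV: "A \<subseteq> V"
  shows "(\<Sum>y\<in>A. real (deg_in E y (V - A))) = real (card (edges_between E A (V - A)))"
proof -
  have fA: "finite A" using fV AV finite_subset by blast
  have "edges_between E A (V - A) = Sigma A (\<lambda>y. {b \<in> V - A. E y b})"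
    unfolding edges_between_def by auto
  then have "card (edges_between E A (V - A)) = (\<Sum>y\<in>A. card {b \<in> V - A. E y b})"
    using fA fV by simp
  then show ?thesis unfolding deg_in_def by simp
qed

lemma sum_hx_le:
  assumes fV: "finite V" and AV: "A \<subseteq> V" and bnd: "\<And>u w. trans_prob E V u w \<le> c"
  shows "(\<Sum>y\<in>V. hx E V A y) \<le> c * real (card (edges_between E A (V - A)))"
proof -
  have "(\<Sum>y\<in>V. hx E V A y) \<le> (\<Sum>y\<in>V. c * (if y \<in> A then real (deg_in E y (V - A)) else 0))"
    by (intro sum_mono hx_le[OF fV bnd])
  also have "\<dots> = c * (\<Sum>y\<in>V. if y \<in> A then real (deg_in E y (V - A)) else 0)"
    by (simp add: sum_distrib_left)
  also have "(\<Sum>y\<in>V. if y \<in> A then real (deg_in E y (V - A)) else 0) = (\<Sum>y\<in>{y\<in>V. y \<in> A}. real (deg_in E y (V - A)))"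
    by (rule sum.inter_filter[OF fV, symmetric])
  also have "{y\<in>V. y \<in> A} = A" using AV by auto
  finally show ?thesis using sum_deg_out[OF fV AV] by simp
qed


theorem lemma3p5:
  fixes V :: "'a::linorder set" and E :: "'a \<Rightarrow> 'a \<Rightarrow> bool"
    and \<delta> \<epsilon> \<theta> :: real and k :: nat and Vs :: "nat \<Rightarrow> 'a set"
  assumes "simple_graph V E"
    and "0 < \<delta>" and "\<delta> \<le> 1" and "0 < \<epsilon>"
    and "\<forall>v\<in>V. real (deg_in E v V) \<ge> \<delta> * real (card V)"
    and "good_decomposition V E \<epsilon> \<delta> (real (card V) powr 1.5) k Vs \<theta>"
  shows "(\<forall>C>0. \<forall>i\<in>{1..k}. \<forall>v\<in>V.
            walk_prob V E v (nat \<lfloor>C * sqrt (card V)\<rfloor> + 1)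
              (\<lambda>xs. \<exists>t. 1 \<le> t \<and> real t \<le> C * sqrt (card V) \<and>
                        xs ! t \<in> Vs i \<and> xs ! (t + 1) \<notin> Vs i)
            \<le> C * \<theta>\<^sup>2 * \<epsilon> ^ 9 / \<delta>\<^sup>2)
       \<and> (\<forall>C>0. \<forall>i\<in>{1..k}. \<exists>V'. V' \<subseteq> Vs i \<and>
            real (card V') \<ge> \<delta> ^ 4 * real (card V) / 80 \<and>
            (\<forall>v\<in>V'. walk_prob V E v (nat \<lfloor>C * sqrt (card V)\<rfloor>)
                       (\<lambda>xs. \<forall>j. real j \<le> C * sqrt (card V) \<longrightarrow> xs ! j \<in> Vs i)
                     \<ge> 1 - 80 * C * \<theta>\<^sup>2 * \<epsilon> ^ 9 / \<delta> ^ 6))"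
proof -
  have fV: "finite V" using assms(1) unfolding simple_graph_def by blast
  note gd = assms(6)[unfolded good_decomposition_def Let_def]
  have beta: "0 < real (card V) powr 1.5" using gd by blast
  have npos: "real (card V) > 0"
  proof (rule ccontr)
    assume "\<not> real (card V) > 0"
    then have "real (card V) = 0" by simp
    then show False using beta by simp
  qed
  have "0 < \<epsilon> powr (11 * 2 powr (2 / \<delta>))" using assms(4) by simp
  then have thpos: "\<theta> > 0" using gd by linarith
  have VsV: "Vs i \<subseteq> V" if "i \<in> {1..k}" for i
  proof -
    have "(\<Union>i\<in>{1..k}. Vs i) = V" using gd by blast
    then show ?thesis using that by blast
  qed
  have cardVs: "real (card (Vs i)) \<ge> \<delta> * real (card V) / 2" if "i \<in> {1..k}" for i
    using gd that by blast
  have Eout0: "real (card (edges_between E (Vs i) (V - Vs i))) \<le> \<epsilon> ^ 9 * \<theta>\<^sup>2 * (real (card V) powr 1.5)"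
    if "i \<in> {1..k}" for i
    using gd that by blast
  define s where "s = sqrt (real (card V))"
  have s_pos: "s > 0" unfolding s_def using npos by simp
  have ss: "s * s = real (card V)" unfolding s_def using npos by simp
  have p15: "real (card V) powr 1.5 = real (card V) * s"
  proof -
    have "real (card V) powr 1.5 = real (card V) powr (1 + 1/2)" by simp
    also have "\<dots> = real (card V) powr 1 * real (card V) powr (1/2)"
      by (rule powr_add)
    also have "\<dots> = real (card V) * real (card V) powr (1/2)"
      using npos by simp
    also have "\<dots> = real (card V) * s" unfolding s_def using npos by (simp add: powr_half_sqrt)
    finally show ?thesis .
  qed
  define D where "D = \<epsilon> ^ 9 * \<theta>\<^sup>2"
  have Dpos: "D > 0" unfolding D_def using assms(4) thpos by simp
  have Eout: "real (card (edges_between E (Vs i) (V - Vs i))) \<le> D * (real (card V) * s)"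
    if "i \<in> {1..k}" for i
    using Eout0[OF that] p15 unfolding D_def by simp
  define c where "c = 1 / (\<delta> * real (card V))"
  have dpos: "\<delta> * real (card V) > 0" using assms(2) npos by simp
  have cpos: "c > 0" unfolding c_def using dpos by simp
  have bnd: "\<And>u w. trans_prob E V u w \<le> c"
    unfolding c_def by (rule tp_bound[OF assms(5) dpos])
  have st: "(\<Sum>w\<in>V. trans_prob E V u w) = 1" if u: "u \<in> V" for u
  proof (rule tp_stoch[OF fV _ u])
    have "real (deg_in E u V) > 0" using assms(5) u dpos by force
    then show "deg_in E u V > 0" by simp
  qed
  have Kb: "c * (\<Sum>y\<in>V. hx E V (Vs i) y) \<le> D / (\<delta>\<^sup>2 * s)" if i: "i \<in> {1..k}" for i
  proof -
    have "c * (\<Sum>y\<in>V. hx E V (Vs i) y) \<le> c * (c * real (card (edges_between E (Vs i) (V - Vs i))))"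
      using sum_hx_le[OF fV VsV[OF i] bnd] cpos by (intro mult_left_mono) auto
    also have "\<dots> \<le> c * (c * (D * (real (card V) * s)))"
      using Eout[OF i] cpos by (intro mult_left_mono) auto
    also have "\<dots> = D / (\<delta>\<^sup>2 * s)"
      unfolding c_def ss[symmetric] using s_pos assms(2) by (simp add: field_simps power2_eq_square)
    finally show ?thesis .
  qed
  have part1: "\<forall>C>0. \<forall>i\<in>{1..k}. \<forall>v\<in>V.
            walk_prob V E v (nat \<lfloor>C * s\<rfloor> + 1)
              (\<lambda>xs. \<exists>t. 1 \<le> t \<and> real t \<le> C * s \<and>
                        xs ! t \<in> Vs i \<and> xs ! (t + 1) \<notin> Vs i)
            \<le> C * \<theta>\<^sup>2 * \<epsilon> ^ 9 / \<delta>\<^sup>2"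
  proof (intro allI impI ballI)
    fix C :: real and i v assume C: "C > 0" and i: "i \<in> {1..k}" and v: "v \<in> V"
    define N where "N = nat \<lfloor>C * s\<rfloor>"
    have NC: "real N \<le> C * s" unfolding N_def using C s_pos by (intro of_nat_floor) simp
    have "walk_prob V E v (N + 1)
              (\<lambda>xs. \<exists>t. 1 \<le> t \<and> real t \<le> C * s \<and> xs ! t \<in> Vs i \<and> xs ! (t + 1) \<notin> Vs i)
          \<le> (\<Sum>t\<in>{..<N}. walk_prob V E v (N + 1) (\<lambda>xs. xs ! Suc t \<in> Vs i \<and> xs ! Suc (Suc t) \<notin> Vs i))"
    proof (rule walk_prob_union[OF fV])
      fix xs assume "\<exists>t. 1 \<le> t \<and> real t \<le> C * s \<and> xs ! t \<in> Vs i \<and> xs ! (t + 1) \<notin> Vs i"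
      then obtain t where t: "1 \<le> t" "real t \<le> C * s" "xs ! t \<in> Vs i" "xs ! (t + 1) \<notin> Vs i"
        by blast
      have "t \<le> N" unfolding N_def by (rule le_nat_floor[OF t(2)])
      then show "\<exists>t\<in>{..<N}. xs ! Suc t \<in> Vs i \<and> xs ! Suc (Suc t) \<notin> Vs i"
        using t by (intro bexI[of _ "t - 1"]) auto
    qed simp
    also have "\<dots> \<le> (\<Sum>t\<in>{..<N}. D / (\<delta>\<^sup>2 * s))"
    proof (intro sum_mono)
      fix t assume "t \<in> {..<N}"
      then have "Suc (Suc t) \<le> N + 1" by simp
      from walk_prob_Qt[OF fV st bnd v this, of "Vs i"] Kb[OF i]
      show "walk_prob V E v (N + 1) (\<lambda>xs. xs ! Suc t \<in> Vs i \<and> xs ! Suc (Suc t) \<notin> Vs i)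
          \<le> D / (\<delta>\<^sup>2 * s)" by linarith
    qed
    also have "\<dots> = real N * (D / (\<delta>\<^sup>2 * s))" by simp
    also have "\<dots> \<le> (C * s) * (D / (\<delta>\<^sup>2 * s))"
      using NC Dpos s_pos assms(2) by (intro mult_right_mono) auto
    also have "\<dots> = C * \<theta>\<^sup>2 * \<epsilon> ^ 9 / \<delta>\<^sup>2"
      unfolding D_def using s_pos by (simp add: field_simps)
    finally show "walk_prob V E v (nat \<lfloor>C * s\<rfloor> + 1)
              (\<lambda>xs. \<exists>t. 1 \<le> t \<and> real t \<le> C * s \<and> xs ! t \<in> Vs i \<and> xs ! (t + 1) \<notin> Vs i)
          \<le> C * \<theta>\<^sup>2 * \<epsilon> ^ 9 / \<delta>\<^sup>2" unfolding N_def .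
  qed
  have part2: "\<forall>C>0. \<forall>i\<in>{1..k}. \<exists>V'. V' \<subseteq> Vs i \<and>
            real (card V') \<ge> \<delta> ^ 4 * real (card V) / 80 \<and>
            (\<forall>v\<in>V'. walk_prob V E v (nat \<lfloor>C * s\<rfloor>)
                       (\<lambda>xs. \<forall>j. real j \<le> C * s \<longrightarrow> xs ! j \<in> Vs i)
                     \<ge> 1 - 80 * C * \<theta>\<^sup>2 * \<epsilon> ^ 9 / \<delta> ^ 6)"
  proof (intro allI impI ballI)
    fix C :: real and i assume C: "C > 0" and i: "i \<in> {1..k}"
    define A where "A = Vs i"
    have AV: "A \<subseteq> V" unfolding A_def using VsV[OF i] .
    have fA: "finite A" using AV fV finite_subset by blast
    define T0 where "T0 = 4 * D * s / \<delta>"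
    have T0pos: "T0 > 0" unfolding T0_def using Dpos s_pos assms(2) by simp
    define V' where "V' = {v\<in>A. real (deg_in E v (V - A)) \<le> T0}"
    define B where "B = {v\<in>A. \<not> real (deg_in E v (V - A)) \<le> T0}"
    have "T0 * real (card B) = (\<Sum>v\<in>B. T0)" by simp
    also have "\<dots> \<le> (\<Sum>v\<in>B. real (deg_in E v (V - A)))"
      by (intro sum_mono) (auto simp: B_def)
    also have "\<dots> \<le> (\<Sum>v\<in>A. real (deg_in E v (V - A)))"
      by (intro sum_mono2 fA) (auto simp: B_def)
    also have "\<dots> = real (card (edges_between E A (V - A)))" by (rule sum_deg_out[OF fV AV])
    also have "\<dots> \<le> D * (real (card V) * s)" unfolding A_def by (rule Eout[OF i])
    finally have TB: "T0 * real (card B) \<le> D * (real (card V) * s)" .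
    have cB: "real (card B) \<le> \<delta> * real (card V) / 4"
    proof -
      have "real (card B) \<le> D * (real (card V) * s) / T0"
        using TB T0pos by (simp add: field_simps)
      also have "\<dots> = \<delta> * real (card V) / 4"
        unfolding T0_def using Dpos s_pos assms(2) by (simp add: field_simps)
      finally show ?thesis .
    qed
    have "V' \<union> B = A" "V' \<inter> B = {}" unfolding V'_def B_def by auto
    then have cA: "card V' + card B = card A"
      using fA by (metis card_Un_disjoint finite_Un)
    have d4: "\<delta> ^ 4 \<le> \<delta>" using assms(2,3) by (simp add: power_le_one_iff power_decreasing[of 1 4 \<delta>, simplified])
    have cardV': "real (card V') \<ge> \<delta> ^ 4 * real (card V) / 80"
    proof -
      have "real (card V') = real (card A) - real (card B)" using cA by linarith
      moreover have "real (card A) \<ge> \<delta> * real (card V) / 2" unfolding A_def by (rule cardVs[OF i])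
      moreover have "\<delta> ^ 4 * real (card V) \<le> \<delta> * real (card V)"
        using d4 npos by (intro mult_right_mono) auto
      ultimately show ?thesis using cB npos assms(2) by linarith
    qed
    show "\<exists>V'. V' \<subseteq> Vs i \<and> real (card V') \<ge> \<delta> ^ 4 * real (card V) / 80 \<and>
            (\<forall>v\<in>V'. walk_prob V E v (nat \<lfloor>C * s\<rfloor>)
                       (\<lambda>xs. \<forall>j. real j \<le> C * s \<longrightarrow> xs ! j \<in> Vs i)
                     \<ge> 1 - 80 * C * \<theta>\<^sup>2 * \<epsilon> ^ 9 / \<delta> ^ 6)"
    proof (intro exI[of _ V'] conjI ballI)
      show "V' \<subseteq> Vs i" unfolding V'_def A_def by auto
      show "real (card V') \<ge> \<delta> ^ 4 * real (card V) / 80" by (rule cardV')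
      fix v assume v': "v \<in> V'"
      then have vA: "v \<in> A" and vV: "v \<in> V" and vdeg: "real (deg_in E v (V - A)) \<le> T0"
        using AV unfolding V'_def by auto
      define N where "N = nat \<lfloor>C * s\<rfloor>"
      have NC: "real N \<le> C * s" unfolding N_def using C s_pos by (intro of_nat_floor) simp
      let ?All = "\<lambda>xs. \<forall>j. real j \<le> C * s \<longrightarrow> xs ! j \<in> A"
      have tot: "walk_prob V E v N ?All + walk_prob V E v N (\<lambda>xs. \<not> ?All xs) = 1"
        using walk_prob_compl[of V E v N ?All] walk_prob_total[OF fV st vV] by simp
      have un: "walk_prob V E v N (\<lambda>xs. \<not> ?All xs)
          \<le> (\<Sum>t\<in>{..<N}. walk_prob V E v N (\<lambda>xs. xs ! t \<in> A \<and> xs ! Suc t \<notin> A))"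
      proof (rule walk_prob_union[OF fV])
        fix xs assume xs: "xs \<in> Lset V v N" and nA: "\<not> ?All xs"
        let ?P = "\<lambda>j. real j \<le> C * s \<and> xs ! j \<notin> A"
        have ex: "\<exists>j. ?P j" using nA by blast
        define j where "j = (LEAST j. ?P j)"
        have Pj: "?P j" unfolding j_def by (rule LeastI_ex[OF ex])
        have minj: "\<And>j'. j' < j \<Longrightarrow> \<not> ?P j'" unfolding j_def by (rule not_less_Least)
        have x0: "xs ! 0 = v" using xs unfolding Lset_def by simp
        have j0: "j \<noteq> 0" using Pj x0 vA by (cases "j = 0") auto
        have jN: "j \<le> N" unfolding N_def using Pj by (intro le_nat_floor) simp
        have "j - 1 < j" using j0 by simp
        then have "xs ! (j - 1) \<in> A" using minj[of "j - 1"] Pj by auto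
        then show "\<exists>t\<in>{..<N}. xs ! t \<in> A \<and> xs ! Suc t \<notin> A"
          using j0 jN Pj by (intro bexI[of _ "j - 1"]) auto
      qed simp
      have sumb: "(\<Sum>t\<in>{..<N}. walk_prob V E v N (\<lambda>xs. xs ! t \<in> A \<and> xs ! Suc t \<notin> A))
          \<le> 80 * C * \<theta>\<^sup>2 * \<epsilon> ^ 9 / \<delta> ^ 6"
      proof (cases N)
        case 0
        then show ?thesis using C assms(2) thpos assms(4) by simp
      next
        case (Suc N')
        have e1: "(\<Sum>t\<in>{..<N}. walk_prob V E v N (\<lambda>xs. xs ! t \<in> A \<and> xs ! Suc t \<notin> A))
           = walk_prob V E v N (\<lambda>xs. xs ! 0 \<in> A \<and> xs ! Suc 0 \<notin> A)
             + (\<Sum>t\<in>{..<N'}. walk_prob V E v N (\<lambda>xs. xs ! Suc t \<in> A \<and> xs ! Suc (Suc t) \<notin> A))"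
          unfolding Suc by (subst sum.lessThan_Suc_shift) simp
        have e2: "walk_prob V E v N (\<lambda>xs. xs ! 0 \<in> A \<and> xs ! Suc 0 \<notin> A) = hx E V A v"
          unfolding Suc by (rule walk_prob_Q0[OF fV st])
        have e3: "hx E V A v \<le> c * T0"
        proof -
          have "hx E V A v \<le> c * real (deg_in E v (V - A))" using hx_le[OF fV bnd, of A v] vA by simp
          also have "\<dots> \<le> c * T0" using vdeg cpos by (intro mult_left_mono) auto
          finally show ?thesis .
        qed
        have e4: "(\<Sum>t\<in>{..<N'}. walk_prob V E v N (\<lambda>xs. xs ! Suc t \<in> A \<and> xs ! Suc (Suc t) \<notin> A))
            \<le> (\<Sum>t\<in>{..<N'}. D / (\<delta>\<^sup>2 * s))"
        proof (intro sum_mono)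
          fix t assume "t \<in> {..<N'}"
          then have "Suc (Suc t) \<le> N" using Suc by simp
          from walk_prob_Qt[OF fV st bnd vV this, of A] Kb[OF i]
          show "walk_prob V E v N (\<lambda>xs. xs ! Suc t \<in> A \<and> xs ! Suc (Suc t) \<notin> A)
              \<le> D / (\<delta>\<^sup>2 * s)" unfolding A_def by linarith
        qed
        have Kpos: "D / (\<delta>\<^sup>2 * s) \<ge> 0" using Dpos s_pos assms(2) by simp
        have e5: "(\<Sum>t\<in>{..<N'}. D / (\<delta>\<^sup>2 * s)) \<le> real N * (D / (\<delta>\<^sup>2 * s))"
        proof -
          have "(\<Sum>t\<in>{..<N'}. D / (\<delta>\<^sup>2 * s)) = real N' * (D / (\<delta>\<^sup>2 * s))" by simp
          also have "\<dots> \<le> real N * (D / (\<delta>\<^sup>2 * s))"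
            using Suc Kpos by (intro mult_right_mono) auto
          finally show ?thesis .
        qed
        have e6: "real N * (D / (\<delta>\<^sup>2 * s)) \<le> (C * s) * (D / (\<delta>\<^sup>2 * s))"
          using NC Kpos by (intro mult_right_mono) auto
        have e7: "(C * s) * (D / (\<delta>\<^sup>2 * s)) = C * D / \<delta>\<^sup>2"
          using s_pos by (simp add: field_simps)
        have e8: "c * T0 = 4 * D / (\<delta>\<^sup>2 * s)"
          unfolding c_def T0_def ss[symmetric] using s_pos assms(2) by (simp add: field_simps power2_eq_square)
        have Cs: "1 \<le> C * s" using NC Suc by simp
        have e9: "4 * D / (\<delta>\<^sup>2 * s) \<le> 4 * C * D / \<delta>\<^sup>2"
        proof -
          have "4 * D / (\<delta>\<^sup>2 * s) = (4 * D / \<delta>\<^sup>2) * (1 / s)" by simp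
          also have "\<dots> \<le> (4 * D / \<delta>\<^sup>2) * C"
          proof (intro mult_left_mono)
            show "1 / s \<le> C" using Cs s_pos by (simp add: field_simps)
            show "0 \<le> 4 * D / \<delta>\<^sup>2" using Dpos by simp
          qed
          finally show ?thesis by (simp add: mult_ac)
        qed
        have e10: "5 * C * D / \<delta>\<^sup>2 \<le> 80 * C * D / \<delta> ^ 6"
        proof -
          have d6: "\<delta> ^ 6 \<le> \<delta>\<^sup>2" using assms(2,3) by (intro power_decreasing) auto
          have "5 * C * D / \<delta>\<^sup>2 \<le> 5 * C * D / \<delta> ^ 6"
            using d6 C Dpos assms(2) by (intro divide_left_mono) auto
          also have "\<dots> \<le> 80 * C * D / \<delta> ^ 6"
            using C Dpos assms(2) by (intro divide_right_mono) auto
          finally show ?thesis .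
        qed
        have e0: "80 * C * D / \<delta> ^ 6 = 80 * C * \<theta>\<^sup>2 * \<epsilon> ^ 9 / \<delta> ^ 6" unfolding D_def by (simp add: algebra_simps)
        have e11: "5 * C * D / \<delta>\<^sup>2 = C * D / \<delta>\<^sup>2 + 4 * C * D / \<delta>\<^sup>2"
          by (simp add: field_simps)
        have "(\<Sum>t\<in>{..<N}. walk_prob V E v N (\<lambda>xs. xs ! t \<in> A \<and> xs ! Suc t \<notin> A))
            \<le> c * T0 + (\<Sum>t\<in>{..<N'}. D / (\<delta>\<^sup>2 * s))"
          unfolding e1 e2 using e3 e4 by (rule add_mono)
        also have "\<dots> \<le> 4 * C * D / \<delta>\<^sup>2 + C * D / \<delta>\<^sup>2"
          using e5 e6 e7 e8 e9 by (intro add_mono) auto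
        also have "\<dots> = 5 * C * D / \<delta>\<^sup>2" using e11 by simp
        also have "\<dots> \<le> 80 * C * D / \<delta> ^ 6" by (rule e10)
        finally show ?thesis using e0 by simp
      qed
      show "walk_prob V E v (nat \<lfloor>C * s\<rfloor>) (\<lambda>xs. \<forall>j. real j \<le> C * s \<longrightarrow> xs ! j \<in> Vs i)
          \<ge> 1 - 80 * C * \<theta>\<^sup>2 * \<epsilon> ^ 9 / \<delta> ^ 6"
        using tot un sumb unfolding N_def A_def by linarith
    qed
  qed
  show ?thesis using part1 part2 unfolding s_def by blast
qed

end
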